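(* Let $n\ge 1$, let $\mathbf{Q}\in\mathbb{R}^{n\times n}$ be symmetric, $\mathbf{c}\in\mathbb{R}^n$, $\mathbf{v}\in\mathbb{R}^n_+$, $V_c>0$ and $\beta>0$. Let $\mathcal{Z}_b=\{\mathbf{z}\in\mathbb{R}^n:\ \mathbf{v}^T\mathbf{z}\le V_c\}$ and $$P_\beta(\mathbf{z})=\tfrac12\mathbf{z}^T\mathbf{Q}\mathbf{z}+\tfrac12\beta\|\mathbf{z}\circ\mathbf{z}-\mathbf{z}\|^2-\mathbf{c}^T\mathbf{z}.$$ For $\boldsymbol{\zeta}=(\boldsymbol{\sigma},\tau)\in\mathbb{R}^n\times\mathbb{R}$ put $\mathbf{G}(\boldsymbol{\sigma})=\mathbf{Q}+2\,\mathrm{Diag}(\boldsymbol{\sigma})$, $\boldsymbol{\psi}(\boldsymbol{\sigma},\tau)=\mathbf{c}-\tau\mathbf{v}+\boldsymbol{\sigma}$, $$\Xi_\beta(\mathbf{z},\boldsymbol{\sigma},\tau)=\tfrac12\mathbf{z}^T\mathbf{G}(\boldsymbol{\sigma})\mathbf{z}-\tfrac12\beta^{-1}\|\boldsymbol{\sigma}\|^2-\mathbf{z}^T\boldsymbol{\psi}(\boldsymbol{\sigma},\tau)-\tau V_c,$$ $\mathcal{S}_a^+=\{(\boldsymbol{\sigma},\tau)\in\mathbb{R}^{n+1}:\ \mathbf{G}(\boldsymbol{\sigma})\succ 0,\ \tau>0\}$, and for $\boldsymbol{\zeta}\in\mathcal{S}_a^+$ $$P^d_\beta(\boldsymbol{\zeta})=-\tfrac12\boldsymbol{\psi}(\boldsymbol{\zeta})^T\mathbf{G}(\boldsymbol{\sigma})^{-1}\boldsymbol{\psi}(\boldsymbol{\zeta})-\tfrac12\beta^{-1}\|\boldsymbol{\sigma}\|^2-\tau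 V_c.$$ If $(\mathbf{z}_\beta,\boldsymbol{\zeta}_\beta)\in\mathbb{R}^n\times\mathcal{S}_a^+$ is a KKT point of $\Xi_\beta$, then $\mathbf{z}_\beta$ is a global minimizer of $P_\beta$ over $\mathcal{Z}_b$, $\boldsymbol{\zeta}_\beta$ is a maximizer of $P^d_\beta$ over $\mathcal{S}_a^+$, and $$P_\beta(\mathbf{z}_\beta)=\min_{\mathbf{z}\in\mathcal{Z}_b}P_\beta(\mathbf{z})=\Xi_\beta(\mathbf{z}_\beta,\boldsymbol{\zeta}_\beta)=\max_{\boldsymbol{\zeta}\in\mathcal{S}_a^+}P^d_\beta(\boldsymbol{\zeta})=P^d_\beta(\boldsymbol{\zeta}_\beta).$$
   Context: $\mathbf{z}\circ\mathbf{z}$ denotes the componentwise square $\{z_i^2\}$, and $\mathrm{Diag}(\boldsymbol{\sigma})$ is the diagonal matrix with diagonal $\boldsymbol{\sigma}$. A KKT point $(\mathbf{z},\boldsymbol{\sigma},\tau)$ of $\Xi_\beta$ means: $\nabla_{\mathbf{z}}\Xi_\beta=0$, $\nabla_{\boldsymbol{\sigma}}\Xi_\beta=0$, and $\mathbf{v}^T\mathbf{z}\le V_c$, $\tau\ge 0$, $\tau(\mathbf{v}^T\mathbf{z}-V_c)=0$. This is the penalty relaxation of the quadratic knapsack problem $\min\{\tfrac12\mathbf{z}^T\mathbf{Q}\mathbf{z}-\mathbf{c}^T\mathbf{z}:\ \mathbf{z}\in\{0,1\}^n,\ \mathbf{v}^T\mathbf{z}\le V_c\}$. *)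

theory Defs
  imports "HOL-Analysis.Analysis"
begin

definition csq :: "real^'n \<Rightarrow> real^'n" where
  "csq z = (\<chi> i. (z$i)^2)"

definition Diag :: "real^'n \<Rightarrow> real^'n^'n" where
  "Diag s = (\<chi> i j. if i = j then s$i else 0)"

definition posdef :: "real^'n^'n \<Rightarrow> bool" where
  "posdef G \<longleftrightarrow> (\<forall>x. x \<noteq> 0 \<longrightarrow> x \<bullet> (G *v x) > 0)"

definition Pbeta :: "real^'n^'n \<Rightarrow> real^'n \<Rightarrow> real \<Rightarrow> real^'n \<Rightarrow> real" where
  "Pbeta Q c \<beta> z = (1/2) * (z \<bullet> (Q *v z)) + (1/2) * \<beta> * (norm (csq z - z))^2 - c \<bullet> z"

definition Gmat :: "real^'n^'n \<Rightarrow> real^'n \<Rightarrow> real^'n^'n" where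
  "Gmat Q s = Q + 2 *\<^sub>R Diag s"

definition psi :: "real^'n \<Rightarrow> real^'n \<Rightarrow> real^'n \<Rightarrow> real \<Rightarrow> real^'n" where
  "psi c v s t = c - t *\<^sub>R v + s"

definition Xi :: "real^'n^'n \<Rightarrow> real^'n \<Rightarrow> real^'n \<Rightarrow> real \<Rightarrow> real \<Rightarrow>
                   real^'n \<Rightarrow> real^'n \<Rightarrow> real \<Rightarrow> real" where
  "Xi Q c v Vc \<beta> z s t =
     (1/2) * (z \<bullet> (Gmat Q s *v z)) - (1/2) * (1/\<beta>) * (norm s)^2
     - z \<bullet> psi c v s t - t * Vc"

definition Sa_plus :: "real^'n^'n \<Rightarrow> ((real^'n) \<times> real) set" where
  "Sa_plus Q = {(s, t). posdef (Gmat Q s) \<and> t > 0}"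

definition Pdual :: "real^'n^'n \<Rightarrow> real^'n \<Rightarrow> real^'n \<Rightarrow> real \<Rightarrow> real \<Rightarrow>
                     (real^'n) \<times> real \<Rightarrow> real" where
  "Pdual Q c v Vc \<beta> \<zeta> = (case \<zeta> of (s, t) \<Rightarrow>
     - (1/2) * (psi c v s t \<bullet> (matrix_inv (Gmat Q s) *v psi c v s t))
     - (1/2) * (1/\<beta>) * (norm s)^2 - t * Vc)"

definition KKT :: "real^'n^'n \<Rightarrow> real^'n \<Rightarrow> real^'n \<Rightarrow> real \<Rightarrow> real \<Rightarrow>
                   real^'n \<Rightarrow> real^'n \<Rightarrow> real \<Rightarrow> bool" where
  "KKT Q c v Vc \<beta> z s t \<longleftrightarrow>
     ((\<lambda>z'. Xi Q c v Vc \<beta> z' s t) has_derivative (\<lambda>h. 0)) (at z) \<and>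
     ((\<lambda>s'. Xi Q c v Vc \<beta> z s' t) has_derivative (\<lambda>h. 0)) (at s) \<and>
     v \<bullet> z \<le> Vc \<and> t \<ge> 0 \<and> t * (v \<bullet> z - Vc) = 0"

end

theory Submission
  imports Defs
begin

lemma posdef_inv:
  fixes G :: "real^'n^'n"
  assumes "posdef G"
  shows "G *v (matrix_inv G *v p) = p"
proof -
  have ker: "\<forall>x. G *v x = 0 \<longrightarrow> x = 0"
  proof (intro allI impI)
    fix x assume "G *v x = 0"
    then show "x = 0" using assms unfolding posdef_def by (metis inner_zero_right less_irrefl)
  qed
  then obtain B where "B ** G = mat 1" using matrix_left_invertible_ker by blast
  then have "invertible G" using invertible_left_inverse by blast
  then have "\<exists>A'. G ** A' = mat 1 \<and> A' ** G = mat 1" unfolding invertible_def .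
  then have "G ** matrix_inv G = mat 1" unfolding matrix_inv_def by (rule someI_ex[THEN conjunct1])
  then show ?thesis by (simp add: matrix_vector_mul_assoc)
qed

lemma sym_inner:
  fixes G :: "real^'n^'n"
  assumes "transpose G = G"
  shows "y \<bullet> (G *v z) = (G *v y) \<bullet> z"
proof -
  have "y \<bullet> (G *v z) = (y v* G) \<bullet> z" by (simp add: dot_lmul_matrix)
  also have "y v* G = transpose G *v y" by simp
  finally show ?thesis using assms by simp
qed

lemma quad_min:
  fixes G :: "real^'n^'n"
  assumes "transpose G = G" "\<forall>x. 0 \<le> x \<bullet> (G *v x)" "G *v y = p"
  shows "1/2 * (y \<bullet> (G *v y)) - y \<bullet> p \<le> 1/2 * (z \<bullet> (G *v z)) - z \<bullet> p"
proof -
  have "0 \<le> (z - y) \<bullet> (G *v (z - y))" using assms(2) by blast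
  also have "\<dots> = z \<bullet> (G *v z) - z \<bullet> (G *v y) - y \<bullet> (G *v z) + y \<bullet> (G *v y)"
    by (simp add: matrix_vector_mult_diff_distrib inner_diff_left inner_diff_right)
  also have "y \<bullet> (G *v z) = z \<bullet> (G *v y)" using sym_inner[OF assms(1)] by (simp add: inner_commute)
  finally show ?thesis using assms(3) by (simp add: inner_commute)
qed

lemma posdef_nn: "posdef G \<Longrightarrow> \<forall>x. 0 \<le> x \<bullet> (G *v x)"
  unfolding posdef_def by (metis inner_zero_left less_eq_real_def order_refl)

lemma Gmat_sym: "transpose Q = Q \<Longrightarrow> transpose (Gmat Q s) = Gmat Q s"
  unfolding Gmat_def Diag_def by (auto simp: vec_eq_iff transpose_def)

lemma Diag_mv: "Diag s *v z = (\<chi> i. s$i * z$i)"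
  unfolding Diag_def matrix_vector_mult_def by (simp add: vec_eq_iff if_distrib[where f="\<lambda>x. x * _"] cong: if_cong)

lemma Diag_quad: "z \<bullet> (Diag s *v z) = s \<bullet> csq z"
  unfolding Diag_mv csq_def inner_vec_def
  by (simp add: power2_eq_square mult_ac)

lemma Diag2: "z \<bullet> ((2::real) *\<^sub>R Diag s *v z) = 2 * (s \<bullet> csq z)"
  by (simp add: scaleR_matrix_vector_assoc[symmetric] Diag_quad)

lemma Xi_alt:
  "Xi Q c v Vc \<beta> z s t = 1/2 * (z \<bullet> (Q *v z)) + s \<bullet> (csq z - z) - (1/(2*\<beta>)) * (s \<bullet> s)
     - c \<bullet> z + t * (v \<bullet> z) - t * Vc"
  unfolding Xi_def Gmat_def psi_def
  by (simp add: matrix_vector_mult_add_rdistrib Diag_quad inner_add_right inner_diff_right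
      inner_diff_left power2_norm_eq_inner algebra_simps inner_commute Diag2)

lemma deriv_s:
  "((\<lambda>s'. Xi Q c v Vc \<beta> z s' t) has_derivative
     (\<lambda>h. h \<bullet> (csq z - z) - (1/(2*\<beta>)) * (h \<bullet> s + s \<bullet> h))) (at s)"
  unfolding Xi_alt
  apply (rule derivative_eq_intros refl | simp)+
  apply (simp add: fun_eq_iff add.commute)
  done

lemma deriv_z:
  "((\<lambda>z'. Xi Q c v Vc \<beta> z' s t) has_derivative
     (\<lambda>h. 1/2 * (h \<bullet> (Gmat Q s *v z) + z \<bullet> (Gmat Q s *v h)) - h \<bullet> psi c v s t)) (at z)"
  unfolding Xi_def
  apply (rule derivative_eq_intros refl bounded_linear.has_derivative[OF matrix_vector_mul_bounded_linear] has_derivative_ident | simp)+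
  apply (simp add: fun_eq_iff add.commute)
  done


lemma fenchel:
  fixes s w :: "real^'n" and \<beta> :: real
  assumes "\<beta> > 0"
  shows "s \<bullet> w - (1/(2*\<beta>)) * (s \<bullet> s) \<le> \<beta>/2 * (w \<bullet> w)"
proof -
  have "0 \<le> (s - \<beta> *\<^sub>R w) \<bullet> (s - \<beta> *\<^sub>R w)" by simp
  also have "\<dots> = s \<bullet> s - 2 * \<beta> * (s \<bullet> w) + \<beta>^2 * (w \<bullet> w)"
    by (simp add: inner_diff_left inner_diff_right inner_commute power2_eq_square)
  finally have "0 \<le> s \<bullet> s - 2 * \<beta> * (s \<bullet> w) + \<beta>^2 * (w \<bullet> w)" .
  then have "0 \<le> (s \<bullet> s - 2 * \<beta> * (s \<bullet> w) + \<beta>^2 * (w \<bullet> w)) / (2*\<beta>)"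
    using assms by simp
  then show ?thesis using assms by (simp add: field_simps power2_eq_square)
qed

theorem theorem1:
  fixes Q :: "real^'n^'n" and c v zb sb :: "real^'n" and Vc \<beta> tb :: real
  assumes symQ: "transpose Q = Q"
    and vnn: "\<forall>i. v $ i \<ge> 0"
    and Vc: "Vc > 0" and beta: "\<beta> > 0"
    and Sa: "(sb, tb) \<in> Sa_plus Q"
    and kkt: "KKT Q c v Vc \<beta> zb sb tb"
  shows "zb \<in> {z. v \<bullet> z \<le> Vc}
    \<and> (\<forall>z \<in> {z. v \<bullet> z \<le> Vc}. Pbeta Q c \<beta> zb \<le> Pbeta Q c \<beta> z)
    \<and> (\<forall>\<zeta> \<in> Sa_plus Q. Pdual Q c v Vc \<beta> \<zeta> \<le> Pdual Q c v Vc \<beta> (sb, tb))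
    \<and> Pbeta Q c \<beta> zb = Xi Q c v Vc \<beta> zb sb tb
    \<and> Xi Q c v Vc \<beta> zb sb tb = Pdual Q c v Vc \<beta> (sb, tb)"
proof -
  define w where "w = csq zb - zb"
  define G where "G = Gmat Q sb"
  define p where "p = psi c v sb tb"
  have pd: "posdef G" and tpos: "tb > 0" using Sa unfolding Sa_plus_def G_def by auto
  have feas: "v \<bullet> zb \<le> Vc" and comp: "tb * (v \<bullet> zb - Vc) = 0" using kkt unfolding KKT_def by auto
  have act: "v \<bullet> zb = Vc" using comp tpos by simp
  have Gs: "transpose G = G" unfolding G_def using Gmat_sym[OF symQ] .
  have "(\<lambda>h. h \<bullet> w - (1/(2*\<beta>)) * (h \<bullet> sb + sb \<bullet> h)) = (\<lambda>h. 0)"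
  proof (rule has_derivative_unique)
    show "((\<lambda>s'. Xi Q c v Vc \<beta> zb s' tb) has_derivative (\<lambda>h. h \<bullet> w - (1/(2*\<beta>)) * (h \<bullet> sb + sb \<bullet> h))) (at sb)"
      unfolding w_def by (rule deriv_s)
    show "((\<lambda>s'. Xi Q c v Vc \<beta> zb s' tb) has_derivative (\<lambda>h. 0)) (at sb)"
      using kkt unfolding KKT_def by (elim conjE)
  qed
  then have "\<forall>h. h \<bullet> (w - (1/\<beta>) *\<^sub>R sb) = 0"
    by (simp add: fun_eq_iff inner_diff_right inner_commute)
  then have "w - (1/\<beta>) *\<^sub>R sb = 0" by (metis inner_eq_zero_iff)
  then have sbw: "sb = \<beta> *\<^sub>R w" using beta by (simp add: algebra_simps)
  have "(\<lambda>h. 1/2 * (h \<bullet> (G *v zb) + zb \<bullet> (G *v h)) - h \<bullet> p) = (\<lambda>h. 0)"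
  proof (rule has_derivative_unique)
    show "((\<lambda>z'. Xi Q c v Vc \<beta> z' sb tb) has_derivative (\<lambda>h. 1/2 * (h \<bullet> (G *v zb) + zb \<bullet> (G *v h)) - h \<bullet> p)) (at zb)"
      unfolding G_def p_def by (rule deriv_z)
    show "((\<lambda>z'. Xi Q c v Vc \<beta> z' sb tb) has_derivative (\<lambda>h. 0)) (at zb)"
      using kkt unfolding KKT_def by (elim conjE)
  qed
  then have "\<forall>h. h \<bullet> (G *v zb - p) = 0"
  proof (intro allI)
    fix h
    assume "(\<lambda>h. 1/2 * (h \<bullet> (G *v zb) + zb \<bullet> (G *v h)) - h \<bullet> p) = (\<lambda>h. 0)"
    then have "1/2 * (h \<bullet> (G *v zb) + zb \<bullet> (G *v h)) - h \<bullet> p = 0" by (metis (no_types))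
    moreover have "zb \<bullet> (G *v h) = h \<bullet> (G *v zb)"
      using sym_inner[OF Gs, of zb h] by (simp only: inner_commute)
    ultimately show "h \<bullet> (G *v zb - p) = 0" by (simp add: inner_diff_right)
  qed
  then have Gz: "G *v zb = p" by (metis inner_eq_zero_iff right_minus_eq)
  have XiA: "Xi Q c v Vc \<beta> z s t = 1/2 * (z \<bullet> (Q *v z)) + s \<bullet> (csq z - z) - (1/(2*\<beta>)) * (s \<bullet> s)
     - c \<bullet> z + t * (v \<bullet> z - Vc)" for z s t
    unfolding Xi_alt by (simp add: algebra_simps)
  have PB: "Pbeta Q c \<beta> z = 1/2 * (z \<bullet> (Q *v z)) + \<beta>/2 * ((csq z - z) \<bullet> (csq z - z)) - c \<bullet> z" for z
    unfolding Pbeta_def by (simp add: power2_norm_eq_inner)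
  have eq1: "Pbeta Q c \<beta> zb = Xi Q c v Vc \<beta> zb sb tb"
    unfolding XiA PB act sbw w_def using beta by (simp add: power2_eq_square)
  have XiG: "Xi Q c v Vc \<beta> zb sb tb = 1/2 * (zb \<bullet> (G *v zb)) - zb \<bullet> p - (1/2) * (1/\<beta>) * (norm sb)^2 - tb * Vc"
    unfolding Xi_def G_def p_def by simp
  have invz: "matrix_inv G *v p = zb"
  proof -
    have "G *v (matrix_inv G *v p) = G *v zb" using posdef_inv[OF pd] Gz by simp
    moreover have "inj ((*v) G)"
    proof -
      have "\<forall>x. G *v x = 0 \<longrightarrow> x = 0" using pd unfolding posdef_def
        by (metis inner_zero_right less_irrefl)
      then show ?thesis by (simp add: inj_on_def) (metis matrix_vector_mult_diff_distrib right_minus_eq)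
    qed
    ultimately show ?thesis by (simp add: inj_eq)
  qed
  have eq2: "Xi Q c v Vc \<beta> zb sb tb = Pdual Q c v Vc \<beta> (sb, tb)"
    unfolding XiG Pdual_def using Gz invz by (simp add: p_def G_def inner_commute)
  have primal: "Pbeta Q c \<beta> zb \<le> Pbeta Q c \<beta> z" if "v \<bullet> z \<le> Vc" for z
  proof -
    have "Xi Q c v Vc \<beta> z sb tb \<le> Pbeta Q c \<beta> z"
      unfolding XiA PB using fenchel[OF beta, of sb "csq z - z"] that tpos
      by (smt (verit) mult_nonneg_nonpos)
    moreover have "Xi Q c v Vc \<beta> zb sb tb \<le> Xi Q c v Vc \<beta> z sb tb"
      using quad_min[OF Gs posdef_nn[OF pd] Gz, of z] unfolding Xi_def G_def p_def by simp
    ultimately show ?thesis using eq1 by simp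
  qed
  have dual: "Pdual Q c v Vc \<beta> \<zeta> \<le> Pdual Q c v Vc \<beta> (sb, tb)" if "\<zeta> \<in> Sa_plus Q" for \<zeta>
  proof -
    obtain s t where st: "\<zeta> = (s, t)" by fastforce
    have pds: "posdef (Gmat Q s)" using that st unfolding Sa_plus_def by auto
    define y where "y = matrix_inv (Gmat Q s) *v psi c v s t"
    have Gy: "Gmat Q s *v y = psi c v s t" unfolding y_def by (rule posdef_inv[OF pds])
    have "Pdual Q c v Vc \<beta> \<zeta> = 1/2 * (y \<bullet> (Gmat Q s *v y)) - y \<bullet> psi c v s t
        - (1/2) * (1/\<beta>) * (norm s)^2 - t * Vc"
      unfolding st Pdual_def using Gy by (simp add: y_def[symmetric] inner_commute)
    also have "\<dots> \<le> Xi Q c v Vc \<beta> zb s t"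
      using quad_min[OF Gmat_sym[OF symQ] posdef_nn[OF pds] Gy, of zb] unfolding Xi_def by simp
    also have "\<dots> \<le> Xi Q c v Vc \<beta> zb sb tb"
      unfolding XiA act sbw w_def[symmetric] using fenchel[OF beta, of s w] beta
      by (simp add: power2_eq_square)
    finally show ?thesis using eq2 by simp
  qed
  show ?thesis using feas primal dual eq1 eq2 by auto
qed

end
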